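(* Let $N\ge 1$, $1<a_1<\cdots<a_N$, $\mathbf a=(a_1,\dots,a_N)$. If $f\in C^{(k)}(\mathbb{R})$ satisfies $f(x)+f(a_1x)+\cdots+f(a_Nx)=0$ for all $x\in\mathbb{R}$ and $k\ge m(\mathbf{a})$, then $f\equiv 0$. In particular, $f\equiv0$ is the only $C^\infty(\mathbb{R})$ function satisfying this equation for all real $x$.
   Context: With $a_0=1$, $m(\mathbf{a})=\min\{m\in\mathbb{N}: \sum_{k=0}^{N-1}(a_k/a_N)^m<1\}$. *)

theory Defs
  imports "HOL-Analysis.Analysis"
begin

definition Ck :: "nat \<Rightarrow> (real \<Rightarrow> real) \<Rightarrow> bool" where
  "Ck k f \<longleftrightarrow>
     (\<forall>j<k. \<forall>x. ((deriv ^^ j) f has_real_derivative (deriv ^^ (Suc j)) f x) (at x))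
     \<and> continuous_on UNIV ((deriv ^^ k) f)"

text \<open>m(a) = min { m in N : sum_{k=0}^{N-1} (a_k/a_N)^m < 1 }, with a_0 = 1 supplied as a 0.\<close>
definition m_a :: "nat \<Rightarrow> (nat \<Rightarrow> real) \<Rightarrow> nat" where
  "m_a N a = (LEAST m::nat. (\<Sum>k<N. (a k / a N) ^ m) < 1)"

end

theory Submission
  imports Defs
begin

lemma mono_a:
  fixes N :: nat and a :: "nat \<Rightarrow> real"
  assumes "a 0 = 1" and "1 < a 1"
    and "\<And>i. 1 \<le> i \<Longrightarrow> i < N \<Longrightarrow> a i < a (Suc i)"
  shows "j \<le> N \<Longrightarrow> k < j \<Longrightarrow> a k < a j"
proof (induction j arbitrary: k)
  case 0 then show ?case by simp
next
  case (Suc j)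
  have s: "a j < a (Suc j)"
  proof (cases "j = 0")
    case True then show ?thesis using assms by simp
  next
    case False then show ?thesis using assms(3)[of j] Suc.prems by simp
  qed
  show ?case
  proof (cases "k = j")
    case True then show ?thesis using s by simp
  next
    case False then have "k < j" using Suc.prems by simp
    then show ?thesis using Suc.IH[of k] Suc.prems s by simp
  qed
qed

lemma main_part:
  fixes N :: nat and a :: "nat \<Rightarrow> real" and f :: "real \<Rightarrow> real"
  assumes N1: "N \<ge> 1"
    and a0: "a 0 = 1"
    and a1: "1 < a 1"
    and am: "\<And>i. 1 \<le> i \<Longrightarrow> i < N \<Longrightarrow> a i < a (Suc i)"
    and ck: "Ck k f" and km: "k \<ge> m_a N a"
    and eq: "\<forall>x. f x + (\<Sum>i=1..N. f (a i * x)) = 0"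
  shows "f x = 0"
proof -
  define D where "D = (\<lambda>j. (deriv ^^ j) f)"
  have lt: "\<And>k j. j \<le> N \<Longrightarrow> k < j \<Longrightarrow> a k < a j"
    using mono_a[OF a0 a1 am] by blast
  have apos: "\<And>i. i \<le> N \<Longrightarrow> a i > 0"
  proof -
    fix i assume "i \<le> N"
    show "a i > 0"
    proof (cases "i = 0")
      case True then show ?thesis using a0 by simp
    next
      case False then show ?thesis using lt[of i 0] \<open>i \<le> N\<close> a0 by simp
    qed
  qed
  have der: "\<And>j y. j < k \<Longrightarrow> (D j has_real_derivative D (Suc j) y) (at y)"
    using ck unfolding Ck_def D_def by auto
  have cont: "continuous_on UNIV (D k)" using ck unfolding Ck_def D_def by auto
  have eqj: "j \<le> k \<Longrightarrow> \<forall>x. D j x + (\<Sum>i=1..N. a i ^ j * D j (a i * x)) = 0" for j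
  proof (induction j)
    case 0 then show ?case using eq by (simp add: D_def)
  next
    case (Suc j)
    then have jk: "j < k" by simp
    have IH: "\<forall>x. D j x + (\<Sum>i=1..N. a i ^ j * D j (a i * x)) = 0" using Suc by simp
    show ?case
    proof
      fix x
      have d1: "((\<lambda>x. D j x + (\<Sum>i=1..N. a i ^ j * D j (a i * x))) has_real_derivative
          D (Suc j) x + (\<Sum>i=1..N. a i ^ j * (D (Suc j) (a i * x) * a i))) (at x)"
        apply (rule DERIV_add)
         apply (rule der[OF jk])
        apply (rule DERIV_sum)
        apply (rule DERIV_cmult)
        apply (rule DERIV_chain2[where f="D j"])
         apply (rule der[OF jk])
        apply (rule DERIV_cmult_Id)
        done
      have fe: "(\<lambda>x. D j x + (\<Sum>i=1..N. a i ^ j * D j (a i * x))) = (\<lambda>x. 0)"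
        using IH by auto
      have d2: "((\<lambda>x. D j x + (\<Sum>i=1..N. a i ^ j * D j (a i * x))) has_real_derivative 0) (at x)"
        unfolding fe by (rule DERIV_const)
      have "D (Suc j) x + (\<Sum>i=1..N. a i ^ j * (D (Suc j) (a i * x) * a i)) = 0"
        using DERIV_unique[OF d1 d2] .
      moreover have "(\<Sum>i=1..N. a i ^ j * (D (Suc j) (a i * x) * a i))
          = (\<Sum>i=1..N. a i ^ Suc j * D (Suc j) (a i * x))"
        by (rule sum.cong) (auto simp: algebra_simps)
      ultimately show "D (Suc j) x + (\<Sum>i=1..N. a i ^ Suc j * D (Suc j) (a i * x)) = 0"
        by simp
    qed
  qed
  have zero0: "j \<le> k \<Longrightarrow> D j 0 = 0" for j
  proof -
    assume "j \<le> k"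
    from eqj[OF this] have "D j 0 + (\<Sum>i=1..N. a i ^ j * D j (a i * 0)) = 0"
      by blast
    then have "D j 0 + (\<Sum>i=1..N. a i ^ j * D j 0) = 0"
      by simp
    then have "(1 + (\<Sum>i=1..N. a i ^ j)) * D j 0 = 0"
      by (simp only: distrib_right sum_distrib_right mult_1)
    moreover have "(\<Sum>i=1..N. a i ^ j) \<ge> 0"
      by (rule sum_nonneg) (use apos in \<open>auto intro: less_imp_le\<close>)
    ultimately show "D j 0 = 0" by (metis add_pos_nonneg mult_eq_0_iff not_one_le_zero zero_less_one order.strict_iff_not)
  qed
  define m where "m = m_a N a"
  define c where "c = (\<Sum>i<N. (a i / a N) ^ m)"
  have ex: "\<exists>m. (\<Sum>i<N. (a i / a N) ^ m) < 1"
  proof -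
    have "((\<lambda>m. \<Sum>i<N. (a i / a N) ^ m) \<longlongrightarrow> (\<Sum>i<N. 0)) sequentially"
    proof (rule tendsto_sum)
      fix i assume "i \<in> {..<N}"
      then have "a i < a N" "a i > 0" "a N > 0" using lt[of N i] apos[of i] apos[of N] by auto
      then have "norm (a i / a N) < 1" by simp
      then show "((\<lambda>m. (a i / a N) ^ m) \<longlongrightarrow> 0) sequentially" by (rule LIMSEQ_power_zero)
    qed
    then have "eventually (\<lambda>m. (\<Sum>i<N. (a i / a N) ^ m) < 1) sequentially"
      by (intro order_tendstoD(2)) auto
    then show ?thesis by (auto simp: eventually_sequentially)
  qed
  have c1: "c < 1" unfolding c_def m_def m_a_def by (rule LeastI_ex[OF ex])
  have mk: "m \<le> k" using km m_def by simp
  define g where "g = D m"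
  have eqm: "\<forall>x. g x + (\<Sum>i=1..N. a i ^ m * g (a i * x)) = 0"
    using eqj[OF mk] g_def by simp
  have aN: "a N > 0" using apos by simp
  have rec: "g y = - (\<Sum>i<N. (a i / a N) ^ m * g ((a i / a N) * y))" for y
  proof -
    have e: "g (y / a N) + (\<Sum>i=1..N. a i ^ m * g (a i * (y / a N))) = 0"
      using eqm by blast
    have s1: "(\<Sum>i=1..N. a i ^ m * g (a i * (y / a N)))
        = (\<Sum>i=1..<N. a i ^ m * g (a i * (y / a N))) + a N ^ m * g y"
      using N1 aN by (simp add: sum.last_plus)
    have s2: "(\<Sum>i<N. a i ^ m * g (a i * (y / a N)))
        = g (y / a N) + (\<Sum>i=1..<N. a i ^ m * g (a i * (y / a N)))"
    proof -
      have "{..<N} = insert 0 {1..<N}" using N1 by auto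
      then show ?thesis using a0 by simp
    qed
    have "a N ^ m * g y = - (\<Sum>i<N. a i ^ m * g (a i * (y / a N)))"
      using e s1 s2 by linarith
    then have "g y = - (\<Sum>i<N. a i ^ m * g (a i * (y / a N))) / a N ^ m"
      using aN by (simp add: field_simps)
    also have "\<dots> = - (\<Sum>i<N. (a i / a N) ^ m * g ((a i / a N) * y))"
      using aN by (simp add: sum_divide_distrib power_divide field_simps)
    finally show ?thesis .
  qed
  have gz: "g y = 0" for y
  proof -
    define R where "R = \<bar>y\<bar>"
    have gc: "continuous_on {-R..R} (\<lambda>t. \<bar>g t\<bar>)"
    proof -
      have "continuous_on UNIV g"
      proof (cases "m = k")
        case True then show ?thesis using cont g_def by simp
      next
        case False then have "m < k" using mk by simp
        then have "\<And>t. isCont g t" using DERIV_isCont[OF der[OF \<open>m < k\<close>]] g_def by simp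
        then show ?thesis by (simp add: continuous_at_imp_continuous_on)
      qed
      then show ?thesis by (intro continuous_intros) (auto intro: continuous_on_subset)
    qed
    obtain y0 where y0: "y0 \<in> {-R..R}" and mx: "\<And>t. t \<in> {-R..R} \<Longrightarrow> \<bar>g t\<bar> \<le> \<bar>g y0\<bar>"
    proof -
      have "{-R..R} \<noteq> {}" using R_def by simp
      from continuous_attains_sup[OF compact_Icc this gc] show ?thesis using that by blast
    qed
    have "\<bar>g y0\<bar> \<le> (\<Sum>i<N. \<bar>(a i / a N) ^ m * g ((a i / a N) * y0)\<bar>)"
    proof -
      have "\<bar>g y0\<bar> = \<bar>\<Sum>i<N. (a i / a N) ^ m * g ((a i / a N) * y0)\<bar>"
        using rec[of y0] by (simp only: abs_minus_cancel)
      also have "\<dots> \<le> (\<Sum>i<N. \<bar>(a i / a N) ^ m * g ((a i / a N) * y0)\<bar>)" by (rule sum_abs)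
      finally show ?thesis .
    qed
    also have "\<dots> \<le> (\<Sum>i<N. (a i / a N) ^ m * \<bar>g y0\<bar>)"
    proof (rule sum_mono)
      fix i assume i: "i \<in> {..<N}"
      then have p: "a i > 0" "a i < a N" using lt[of N i] apos[of i] by auto
      then have r: "0 < a i / a N" "a i / a N \<le> 1" using aN by auto
      have "\<bar>(a i / a N) * y0\<bar> \<le> \<bar>y0\<bar>"
      proof -
        have "\<bar>(a i / a N) * y0\<bar> = (a i / a N) * \<bar>y0\<bar>" using r by (simp only: abs_mult abs_of_pos)
        also have "\<dots> \<le> \<bar>y0\<bar>" using r by (intro mult_left_le_one_le) auto
        finally show ?thesis .
      qed
      moreover have "\<bar>y0\<bar> \<le> R" using y0 by auto
      ultimately have "\<bar>(a i / a N) * y0\<bar> \<le> R" by linarith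
      then have "(a i / a N) * y0 \<in> {-R..R}" unfolding atLeastAtMost_iff abs_le_iff by linarith
      then have "\<bar>g ((a i / a N) * y0)\<bar> \<le> \<bar>g y0\<bar>" by (rule mx)
      then show "\<bar>(a i / a N) ^ m * g ((a i / a N) * y0)\<bar> \<le> (a i / a N) ^ m * \<bar>g y0\<bar>"
        using r by (simp add: abs_mult mult_left_mono)
    qed
    also have "\<dots> = c * \<bar>g y0\<bar>" unfolding c_def by (simp add: sum_distrib_right)
    finally have "\<bar>g y0\<bar> \<le> c * \<bar>g y0\<bar>" .
    then have "(1 - c) * \<bar>g y0\<bar> \<le> 0" by (simp add: algebra_simps)
    moreover have "1 - c > 0" using c1 by simp
    ultimately have "\<bar>g y0\<bar> = 0" by (simp add: mult_le_0_iff)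
    moreover have "y \<in> {-R..R}" using R_def by auto
    ultimately show ?thesis using mx by fastforce
  qed
  have down: "j \<le> m \<Longrightarrow> \<forall>x. D (m - j) x = 0" for j
  proof (induction j)
    case 0 then show ?case using gz g_def by simp
  next
    case (Suc j)
    then have jm: "m - Suc j < k" "Suc (m - Suc j) = m - j" using mk by auto
    have "\<forall>x. (D (m - Suc j) has_real_derivative 0) (at x)"
      using der[OF jm(1)] Suc jm(2) by fastforce
    then have "\<And>x. D (m - Suc j) x = D (m - Suc j) 0" by (rule DERIV_isconst_all)
    then show ?case using zero0[of "m - Suc j"] mk by simp
  qed
  show ?thesis using down[of m] by (simp add: D_def)
qed

theorem mainTheorem2:
  fixes N :: nat and a :: "nat \<Rightarrow> real"
  assumes "N \<ge> 1"
    and "a 0 = 1"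
    and "1 < a 1"
    and "\<And>i. 1 \<le> i \<Longrightarrow> i < N \<Longrightarrow> a i < a (Suc i)"
  shows "(\<forall>k f. Ck k f \<and> k \<ge> m_a N a \<and> (\<forall>x. f x + (\<Sum>i=1..N. f (a i * x)) = 0)
              \<longrightarrow> (\<forall>x. f x = 0))
       \<and> (\<forall>f. (\<forall>k. Ck k f) \<and> (\<forall>x. f x + (\<Sum>i=1..N. f (a i * x)) = 0)
              \<longrightarrow> (\<forall>x. f x = 0))"
  using main_part[OF assms] by blast

end
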